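(* Let $a,b$ be positive integers and $n\ge2$ an integer, and let $h(j)=aj^n+b$ for $j\ge0$, $h(j)=0$ for $j<0$. If $\lfloor a/b\rfloor+1\ge 4$, then $\operatorname{hdepth}(h)\ge4$.
   Context: For a nonzero function $h:\mathbb Z\to\mathbb Z_{\ge 0}$ with $h(j)=0$ for all sufficiently negative $j$, and integers $k\le d$, set $\beta_k^d(h)=\sum_{j\le k}(-1)^{k-j}\binom{d-j}{k-j}h(j)$, and $\operatorname{hdepth}(h)=\max\{d\in\mathbb Z:\ \beta_k^d(h)\ge 0\text{ for all integers }k\le d\}$. *)

theory Defs
  imports Complex_Main
begin

text \<open>The sum ranges over the (finite, since h vanishes for sufficiently negative j)
  set of j <= k with h j nonzero; terms with h j = 0 contribute nothing.
  Only meaningful for k <= d (then d-j >= k-j >= 0).\<close>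
definition hbeta :: "(int \<Rightarrow> int) \<Rightarrow> int \<Rightarrow> int \<Rightarrow> int" where
  "hbeta h k d = (\<Sum>j\<in>{j. j \<le> k \<and> h j \<noteq> 0}.
      (-1) ^ nat (k - j) * int (nat (d - j) choose nat (k - j)) * h j)"

definition hdepth :: "(int \<Rightarrow> int) \<Rightarrow> int" where
  "hdepth h = (GREATEST d. \<forall>k. k \<le> d \<longrightarrow> hbeta h k d \<ge> 0)"

end

theory Submission
  imports Defs
begin

theorem lemma3p8:
  fixes a b :: int and n :: nat
  assumes "a > 0" and "b > 0" and "n \<ge> 2"
    and "\<lfloor>real_of_int a / real_of_int b\<rfloor> + 1 \<ge> 4"
  shows "hdepth (\<lambda>j. if j \<ge> 0 then a * j ^ n + b else 0) \<ge> 4"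
proof -
  define h where "h = (\<lambda>j::int. if j \<ge> 0 then a * j ^ n + b else 0)"
  have ab: "3 * b \<le> a"
  proof -
    have "3 \<le> \<lfloor>real_of_int a / real_of_int b\<rfloor>" using assms(4) by linarith
    hence "3 \<le> real_of_int a / real_of_int b" by (simp add: le_floor_iff)
    hence "3 * real_of_int b \<le> real_of_int a" using assms(2) by (simp add: field_simps)
    thus ?thesis by linarith
  qed
  have z0: "(0::int)^n = 0" using assms(3) by simp
  have hpos: "j \<ge> 0 \<Longrightarrow> h j > 0" for j
    using assms(1,2) by (simp add: h_def add_nonneg_pos)
  have setq: "{j. j \<le> k \<and> h j \<noteq> 0} = {0..k}" for k
    using hpos by (auto simp: h_def) (metis less_irrefl)
  have hb: "hbeta h k d = (\<Sum>j\<in>{0..k}. (-1) ^ nat (k - j) * int (nat (d - j) choose nat (k - j)) * h j)" for k d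
    unfolding hbeta_def setq ..
  define P where "P d = (\<forall>k. k \<le> d \<longrightarrow> hbeta h k d \<ge> 0)" for d
  obtain m where nn: "n = m + 2" using assms(3) by (metis add.commute le_Suc_ex)
  have p2: "(2::int)^n \<ge> 4" unfolding nn by (simp add: power_add)
  have p3: "(3::int)^n \<ge> 2 * 2^n"
  proof -
    have "(2::int)^m \<le> 3^m" by (rule power_mono) auto
    thus ?thesis unfolding nn by (simp add: power_add) (smt (verit) zero_le_power)
  qed
  have p4: "(4::int)^n \<ge> 3^n" by (rule power_mono) auto
  have P4: "P 4"
    unfolding P_def
  proof (intro allI impI)
    fix k :: int assume k: "k \<le> 4"
    show "hbeta h k 4 \<ge> 0"
    proof (cases "k < 0")
      case True thus ?thesis by (simp add: hb)
    next
      case False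
      then consider "k = 0" | "k = 1" | "k = 2" | "k = 3" | "k = 4" using k by linarith
      thus ?thesis
      proof cases
        case 1 thus ?thesis unfolding hb using assms by (simp add: z0 h_def)
      next
        case 2
        have "{0..1::int} = {0,1}" by auto
        thus ?thesis unfolding hb using 2 ab assms by (simp add: z0 h_def)
      next
        case 3
        have "{0..2::int} = {0,1,2}" by auto
        hence "hbeta h k 4 = h 2 - 3 * h 1 + 6 * h 0" unfolding hb using 3 by (simp add: numeral_eq_Suc)
        moreover have "h 2 = a * 2^n + b" "h 1 = a + b" "h 0 = b" by (simp_all add: h_def z0)
        moreover have "a * 2^n \<ge> a * 4" using p2 assms(1) by simp
        ultimately show ?thesis using ab assms by linarith
      next
        case 4
        have "{0..3::int} = {0,1,2,3}" by auto
        hence "hbeta h k 4 = h 3 - 2 * h 2 + 3 * h 1 - 4 * h 0" unfolding hb using 4 by (simp add: numeral_eq_Suc)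
        moreover have "h 3 = a * 3^n + b" "h 2 = a * 2^n + b" "h 1 = a + b" "h 0 = b" by (simp_all add: h_def z0)
        moreover have "a * 3^n \<ge> a * (2 * 2^n)" using p3 assms(1) by simp
        ultimately show ?thesis using ab assms by linarith
      next
        case 5
        have "{0..4::int} = {0,1,2,3,4}" by auto
        hence "hbeta h k 4 = h 0 - h 1 + h 2 - h 3 + h 4" unfolding hb using 5 by simp
        moreover have "h 4 = a * 4^n + b" "h 3 = a * 3^n + b" "h 2 = a * 2^n + b" "h 1 = a + b" "h 0 = b" by (simp_all add: h_def z0)
        moreover have "a * 4^n \<ge> a * 3^n" using p4 assms(1) by simp
        moreover have "a * 2^n \<ge> a * 4" using p2 assms(1) by simp
        ultimately show ?thesis using ab assms by linarith
      qed
    qed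
  qed
  have bound: "P d \<Longrightarrow> d \<le> a + b" for d
  proof (rule ccontr)
    assume Pd: "P d" and "\<not> d \<le> a + b"
    hence d: "d > a + b" by simp
    have "{0..1::int} = {0,1}" by auto
    hence "hbeta h 1 d = h 1 - int (nat d choose 1) * h 0" unfolding hb by simp
    also have "\<dots> = a + b - d * b" using d assms by (simp add: z0 h_def)
    also have "\<dots> < 0"
    proof -
      have "d * 1 \<le> d * b" using d assms by (intro mult_left_mono) auto
      thus ?thesis using d by linarith
    qed
    finally show False using Pd d assms unfolding P_def by (smt (verit))
  qed
  define M where "M = Max {d \<in> {4..a+b}. P d}"
  have fin: "finite {d \<in> {4..a+b}. P d}" by (rule finite_subset[of _ "{4..a+b}"]) auto
  have mem: "4 \<in> {d \<in> {4..a+b}. P d}" using P4 bound by auto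
  have PM: "P M" and M4: "M \<ge> 4"
    using Max_in[OF fin] Max_ge[OF fin mem] mem unfolding M_def by auto
  have le: "P d \<Longrightarrow> d \<le> M" for d
  proof (cases "d < 4")
    case True thus ?thesis using M4 by simp
  next
    case False
    assume "P d"
    hence "d \<in> {d \<in> {4..a+b}. P d}" using False bound by auto
    thus ?thesis unfolding M_def using Max_ge[OF fin] by blast
  qed
  have "hdepth h = M"
    unfolding hdepth_def
    by (rule Greatest_equality) (use PM le in \<open>auto simp: P_def\<close>)
  thus ?thesis using M4 unfolding h_def by simp
qed

end
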